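(* Consider the quantized estimation system below, under the assumption that all partitioned observation subvectors $\{\mathbf{x}_{jl}\}$ are known to be independent and that there are only $W<\sum_j L_j$ distinct statistical models among them: the subvector indices using the $w$-th model $(\tilde{\mathscr{X}}_w,\tilde{\mathscr{F}}_w,\tilde{\mathscr{P}}_w^{\boldsymbol{\theta}})$ form group $\mathcal{A}_w$, which is split into $T_w$ disjoint nonempty subgroups $\mathcal{A}_w^{(t)}$ whose subvectors all use the same vector quantizer $\tilde\gamma_w^{(t)}$ with $\tilde R_w^{(t)}$ levels and regions $\{\tilde I_{wt}^{(r)}\}$. (i) Suppose the interior of $\boldsymbol{\Theta}\subset\mathbb{R}^{D_{\boldsymbol{\theta}}}$ is nonempty and every $q_j^{(\mathbf{s})}(\boldsymbol{\theta})$ is twice differentiable in $\boldsymbol{\theta}$ on $\boldsymbol{\Theta}$. Then for any $\boldsymbol{\theta}$, any quantization regions $\{\tilde I_{wt}^{(r)}\}$ and any statistical models $\{(\tilde{\mathscr{X}}_w,\tilde{\mathscr{F}}_w,\tilde{\mathscr{P}}_w^{\boldsymbol{\theta}})\}$, if $$D_{\boldsymbol{\theta}} > \lambda_{\text{Indep}}^{\text{ISM}}\big(\{\mathcal{A}_w^{(t)}\},\{\tilde R_w^{(t)}\}\big) := \sum_{w=1}^W\sum_{t=1}^{T_w}\big(\tilde R_w^{(t)}-1\big),$$ then the Fisher information matrix for estimating $\boldsymbol{\theta}$ is singular. (ii) Suppose the interior of $\boldsymbol{\Theta}$ is nonempty and every $q_j^{(\mathbf{s})}(\boldsymbol{\theta})$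 is continuous in $\boldsymbol{\theta}$. Then for any $\{\tilde I_{wt}^{(r)}\}$ and any $\{(\tilde{\mathscr{X}}_w,\tilde{\mathscr{F}}_w,\tilde{\mathscr{P}}_w^{\boldsymbol{\theta}})\}$, if the same inequality $D_{\boldsymbol{\theta}}>\lambda_{\text{Indep}}^{\text{ISM}}$ holds, the vector parameter space $\boldsymbol{\Theta}$ is not identifiable; moreover, every open subset $\mathcal{U}\subset\boldsymbol{\Theta}$ of $\mathbb{R}^{D_{\boldsymbol{\theta}}}$ contains infinitely many nonidentifiable vector parameter points.
   Context: System: $N$ sensors; sensor $j$ observes $\mathbf{x}_j$, independent across $j$, unknown $\boldsymbol{\theta}\in\boldsymbol{\Theta}\subset\mathbb{R}^{D_{\boldsymbol{\theta}}}$. $\mathbf{x}_j$ is partitioned into $L_j$ subvectors $\mathbf{x}_{jl}$, each quantized by an $R_{jl}$-level vector quantizer $\gamma_{jl}(\mathbf{x}_{jl})=\sum_r r\,\mathbb{1}\{\mathbf{x}_{jl}\in I_{jl}^{(r)}\}$ with disjoint covering regions; the superquantizer output $\mathbf{u}_j=\Gamma_j(\mathbf{x}_j)=[\gamma_{j1}(\mathbf{x}_{j1}),\dots,\gamma_{jL_j}(\mathbf{x}_{jL_j})]^T$ is sent error-free to a fusion center, which estimates $\boldsymbol{\theta}$ from $\mathbf{u}=[\mathbf{u}_1^T,\dots,\mathbf{u}_N^T]^T$. $q_j^{(\mathbf{s})}(\boldsymbol{\theta})=\mathscr{P}_j^{\boldsymbol{\theta}}(\Gamma_j(\mathbf{x}_j)=\mathbf{s})$,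 where $\mathscr{P}_j^{\boldsymbol{\theta}}$ is the law of $\mathbf{x}_j$. Fisher information matrix $\mathbf{J}(\boldsymbol{\theta})=\sum_j\sum_{\mathbf{s}}\frac{1}{q_j^{(\mathbf{s})}}\frac{\partial q_j^{(\mathbf{s})}}{\partial\boldsymbol{\theta}}\big[\frac{\partial q_j^{(\mathbf{s})}}{\partial\boldsymbol{\theta}}\big]^T$. Two distinct points are observationally equivalent if $\Pr(\mathbf{u}|\boldsymbol{\theta})=\Pr(\mathbf{u}|\boldsymbol{\theta}')$ for all $\mathbf{u}$; a point is identifiable if no other point is observationally equivalent to it; $\boldsymbol{\Theta}$ is identifiable if every point is. If indices of $\mathbf{x}_{j_1l_1}$ and $\mathbf{x}_{j_2l_2}$ lie in the same $\mathcal{A}_w^{(t)}$ then $\gamma_{j_1l_1}=\gamma_{j_2l_2}$. *)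

theory Defs
  imports "HOL-Probability.Probability"
begin

text \<open>Joint law of the observation x_j of sensor j: its L_j subvectors x_jl are
  independent, x_jl distributed according to model gw j l (product measure).
  x_j is represented as the function l \<mapsto> x_jl.\<close>
definition sensor_law ::
  "(nat \<Rightarrow> real^'d \<Rightarrow> 'x measure) \<Rightarrow> (nat \<Rightarrow> nat \<Rightarrow> nat) \<Rightarrow> (nat \<Rightarrow> nat)
    \<Rightarrow> nat \<Rightarrow> real^'d \<Rightarrow> (nat \<Rightarrow> 'x) measure" where
  "sensor_law P gw L j \<theta> = PiM {..<L j} (\<lambda>l. P (gw j l) \<theta>)"

text \<open>Superquantizer Gamma_j: subvector l of sensor j uses the quantizer
  of its subgroup (gw j l, gt j l).\<close>
definition superquantizer ::
  "(nat \<Rightarrow> nat \<Rightarrow> 'x \<Rightarrow> nat) \<Rightarrow> (nat \<Rightarrow> nat \<Rightarrow> nat) \<Rightarrow> (nat \<Rightarrow> nat \<Rightarrow> nat)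
    \<Rightarrow> (nat \<Rightarrow> nat) \<Rightarrow> nat \<Rightarrow> (nat \<Rightarrow> 'x) \<Rightarrow> (nat \<Rightarrow> nat)" where
  "superquantizer Q gw gt L j x = (\<lambda>l\<in>{..<L j}. Q (gw j l) (gt j l) (x l))"

definition qprob ::
  "(nat \<Rightarrow> real^'d \<Rightarrow> 'x measure) \<Rightarrow> (nat \<Rightarrow> nat \<Rightarrow> 'x \<Rightarrow> nat) \<Rightarrow> (nat \<Rightarrow> nat \<Rightarrow> nat)
    \<Rightarrow> (nat \<Rightarrow> nat \<Rightarrow> nat) \<Rightarrow> (nat \<Rightarrow> nat) \<Rightarrow> nat \<Rightarrow> (nat \<Rightarrow> nat) \<Rightarrow> real^'d \<Rightarrow> real" where
  "qprob P Q gw gt L j s \<theta> =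
     measure (sensor_law P gw L j \<theta>)
       {x \<in> space (sensor_law P gw L j \<theta>). superquantizer Q gw gt L j x = s}"

definition out_set ::
  "(nat \<Rightarrow> nat \<Rightarrow> nat) \<Rightarrow> (nat \<Rightarrow> nat \<Rightarrow> nat) \<Rightarrow> (nat \<Rightarrow> nat \<Rightarrow> nat) \<Rightarrow> (nat \<Rightarrow> nat)
    \<Rightarrow> nat \<Rightarrow> (nat \<Rightarrow> nat) set" where
  "out_set R gw gt L j = PiE {..<L j} (\<lambda>l. {1..R (gw j l) (gt j l)})"

definition grad :: "(real^'d \<Rightarrow> real) \<Rightarrow> real^'d \<Rightarrow> real^'d" where
  "grad f x = (\<chi> i. frechet_derivative f (at x) (axis i 1))"

definition fisher_info ::
  "nat \<Rightarrow> (nat \<Rightarrow> (nat \<Rightarrow> nat) set) \<Rightarrow> (nat \<Rightarrow> (nat \<Rightarrow> nat) \<Rightarrow> real^'d \<Rightarrow> real)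
    \<Rightarrow> real^'d \<Rightarrow> real^'d^'d" where
  "fisher_info N S q \<theta> =
     (\<Sum>j<N. \<Sum>s\<in>S j. (1 / q j s \<theta>) *\<^sub>R
        (\<chi> a b. grad (q j s) \<theta> $ a * grad (q j s) \<theta> $ b))"

text \<open>Pr(u | theta) = prod_j q_j^(u_j)(theta) (sensors independent).\<close>
definition obs_equiv ::
  "nat \<Rightarrow> (nat \<Rightarrow> (nat \<Rightarrow> nat) set) \<Rightarrow> (nat \<Rightarrow> (nat \<Rightarrow> nat) \<Rightarrow> real^'d \<Rightarrow> real)
    \<Rightarrow> real^'d \<Rightarrow> real^'d \<Rightarrow> bool" where
  "obs_equiv N S q \<theta> \<theta>' \<longleftrightarrow>
     (\<forall>u \<in> PiE {..<N} S. (\<Prod>j<N. q j (u j) \<theta>) = (\<Prod>j<N. q j (u j) \<theta>'))"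

definition identifiable_point ::
  "nat \<Rightarrow> (nat \<Rightarrow> (nat \<Rightarrow> nat) set) \<Rightarrow> (nat \<Rightarrow> (nat \<Rightarrow> nat) \<Rightarrow> real^'d \<Rightarrow> real)
    \<Rightarrow> (real^'d) set \<Rightarrow> real^'d \<Rightarrow> bool" where
  "identifiable_point N S q \<Theta> \<theta> \<longleftrightarrow> \<not> (\<exists>\<theta>'\<in>\<Theta>. \<theta>' \<noteq> \<theta> \<and> obs_equiv N S q \<theta> \<theta>')"

definition identifiable_set ::
  "nat \<Rightarrow> (nat \<Rightarrow> (nat \<Rightarrow> nat) set) \<Rightarrow> (nat \<Rightarrow> (nat \<Rightarrow> nat) \<Rightarrow> real^'d \<Rightarrow> real)
    \<Rightarrow> (real^'d) set \<Rightarrow> bool" where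
  "identifiable_set N S q \<Theta> \<longleftrightarrow> (\<forall>\<theta>\<in>\<Theta>. identifiable_point N S q \<Theta> \<theta>)"

definition twice_differentiable_on :: "(real^'d \<Rightarrow> real) \<Rightarrow> (real^'d) set \<Rightarrow> bool" where
  "twice_differentiable_on f S \<longleftrightarrow>
     (\<exists>g. (\<forall>x\<in>S. (f has_derivative (\<lambda>h. g x \<bullet> h)) (at x within S)) \<and>
          (\<forall>x\<in>S. g differentiable (at x within S)))"

definition lambda_ISM :: "nat \<Rightarrow> (nat \<Rightarrow> nat) \<Rightarrow> (nat \<Rightarrow> nat \<Rightarrow> nat) \<Rightarrow> nat" where
  "lambda_ISM W T R = (\<Sum>w<W. \<Sum>t<T w. (R w t - 1))"

end

theory Submission
  imports Defs
begin

lemma lin_inner: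
  fixes f :: "real^'n \<Rightarrow> real"
  assumes "linear f"
  shows "f z = (\<chi> i. f (axis i 1)) \<bullet> z"
proof -
  have "f z = f (\<Sum>i\<in>UNIV. z $ i *s axis i 1)" by (simp only: basis_expansion)
  also have "\<dots> = (\<Sum>i\<in>UNIV. z $ i * f (axis i 1))"
    using assms by (simp add: linear_sum linear_scale scalar_mult_eq_scaleR)
  also have "\<dots> = (\<chi> i. f (axis i 1)) \<bullet> z"
    by (simp add: inner_vec_def mult.commute)
  finally show ?thesis .
qed

lemma sum_slice_PiE:
  fixes f :: "'a \<Rightarrow> 'b \<Rightarrow> real"
  assumes "finite I" "\<And>i. i \<in> I \<Longrightarrow> finite (A i)" "i0 \<in> I" "r \<in> A i0"
  shows "(\<Sum>s\<in>{s\<in>PiE I A. s i0 = r}. \<Prod>i\<in>I. f i (s i)) = f i0 r * (\<Prod>i\<in>I-{i0}. \<Sum>a\<in>A i. f i a)"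
proof -
  have "{s\<in>PiE I A. s i0 = r} = PiE I (A(i0 := {r}))"
  proof (rule set_eqI)
    fix s
    show "s \<in> {s\<in>PiE I A. s i0 = r} \<longleftrightarrow> s \<in> PiE I (A(i0 := {r}))"
    proof
      assume "s \<in> {s\<in>PiE I A. s i0 = r}"
      then show "s \<in> PiE I (A(i0 := {r}))" by (auto simp: PiE_iff)
    next
      assume a: "s \<in> PiE I (A(i0 := {r}))"
      then have "s i0 = r" using assms(3) by (auto simp: PiE_iff)
      moreover have "s \<in> PiE I A"
        using a assms(4) \<open>s i0 = r\<close> by (auto simp: PiE_iff split: if_split_asm)
      ultimately show "s \<in> {s\<in>PiE I A. s i0 = r}" by simp
    qed
  qed
  then have "(\<Sum>s\<in>{s\<in>PiE I A. s i0 = r}. \<Prod>i\<in>I. f i (s i)) = (\<Prod>i\<in>I. \<Sum>a\<in>(A(i0 := {r})) i. f i a)"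
    using assms(1,2) by (subst prod_sum_PiE) auto
  also have "\<dots> = (\<Sum>a\<in>(A(i0 := {r})) i0. f i0 a) * (\<Prod>i\<in>I-{i0}. \<Sum>a\<in>(A(i0 := {r})) i. f i a)"
    using assms(1,3) by (rule prod.remove)
  also have "(\<Prod>i\<in>I-{i0}. \<Sum>a\<in>(A(i0 := {r})) i. f i a) = (\<Prod>i\<in>I-{i0}. \<Sum>a\<in>A i. f i a)"
    by (intro prod.cong refl) auto
  finally show ?thesis by simp
qed
lemma sum_mv:
  fixes A :: "'i \<Rightarrow> real^'n^'n"
  shows "(\<Sum>i\<in>I. A i) *v z = (\<Sum>i\<in>I. A i *v z)"
proof (induction I rule: infinite_finite_induct)
  case (infinite I) then show ?case by (simp add: matrix_vector_mult_def vec_eq_iff)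
next
  case empty then show ?case by (simp add: matrix_vector_mult_def vec_eq_iff)
next
  case (insert x F) then show ?case by (simp add: matrix_vector_mult_add_rdistrib)
qed

lemma rank1_mv:
  fixes g z :: "real^'n"
  assumes "g \<bullet> z = 0"
  shows "(c *\<^sub>R (\<chi> a b. g $ a * g $ b)) *v z = 0"
proof -
  have "(\<chi> a b. g $ a * g $ b) *v z = (\<chi> a. g $ a * (g \<bullet> z))"
    by (simp add: matrix_vector_mult_def inner_vec_def sum_distrib_left mult.assoc vec_eq_iff)
  then show ?thesis using assms by (simp add: scaleR_matrix_vector_assoc[symmetric] vec_eq_iff)
qed


locale qsys =
  fixes N W :: nat
    and L :: "nat \<Rightarrow> nat"
    and T :: "nat \<Rightarrow> nat"
    and gw gt :: "nat \<Rightarrow> nat \<Rightarrow> nat"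
    and R :: "nat \<Rightarrow> nat \<Rightarrow> nat"
    and M :: "nat \<Rightarrow> 'x measure"
    and P :: "nat \<Rightarrow> real^'d \<Rightarrow> 'x measure"
    and Q :: "nat \<Rightarrow> nat \<Rightarrow> 'x \<Rightarrow> nat"
    and \<Theta> :: "(real^'d) set"
  assumes grp: "\<forall>j<N. \<forall>l<L j. gw j l < W \<and> gt j l < T (gw j l)"
    and subgrp_nonempty: "\<forall>w<W. \<forall>t<T w. \<exists>j<N. \<exists>l<L j. gw j l = w \<and> gt j l = t"
    and models_prob: "\<forall>w<W. \<forall>\<theta>\<in>\<Theta>. prob_space (P w \<theta>)"
    and models_sets: "\<forall>w<W. \<forall>\<theta>. sets (P w \<theta>) = sets (M w)"
    and quant_meas: "\<forall>w<W. \<forall>t<T w. Q w t \<in> measurable (M w) (count_space UNIV)"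
    and quant_range: "\<forall>w<W. \<forall>t<T w. \<forall>x\<in>space (M w). Q w t x \<in> {1..R w t}"
begin

definition mm :: "nat \<Rightarrow> nat \<Rightarrow> nat \<Rightarrow> real^'d \<Rightarrow> real" where
  "mm w t r \<theta> = measure (P w \<theta>) {y \<in> space (P w \<theta>). Q w t y = r}"

lemma Qmeas: "w < W \<Longrightarrow> t < T w \<Longrightarrow> Q w t \<in> measurable (P w \<theta>) (count_space UNIV)"
proof -
  assume a: "w < W" "t < T w"
  have "sets (P w \<theta>) = sets (M w)" using models_sets a by auto
  then have "measurable (P w \<theta>) (count_space UNIV) = measurable (M w) (count_space UNIV)"
    by (rule measurable_cong_sets) simp
  then show ?thesis using quant_meas a by auto
qed

lemma msets: "w < W \<Longrightarrow> t < T w \<Longrightarrow> {y \<in> space (P w \<theta>). Q w t y = r} \<in> sets (P w \<theta>)"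
proof -
  assume a: "w < W" "t < T w"
  have "Q w t -` {r} \<inter> space (P w \<theta>) \<in> sets (P w \<theta>)"
    using measurable_sets[OF Qmeas[OF a]] by simp
  moreover have "Q w t -` {r} \<inter> space (P w \<theta>) = {y \<in> space (P w \<theta>). Q w t y = r}" by auto
  ultimately show ?thesis by simp
qed

lemma sum1:
  assumes "\<theta> \<in> \<Theta>" "w < W" "t < T w"
  shows "(\<Sum>r\<in>{1..R w t}. mm w t r \<theta>) = 1"
proof -
  interpret prob_space "P w \<theta>" using models_prob assms by auto
  note Qm = Qmeas[OF assms(2,3), of \<theta>]
  let ?D = "distr (P w \<theta>) (count_space UNIV) (Q w t)"
  interpret D: prob_space ?D by (rule prob_space_distr[OF Qm])
  have sp: "space (P w \<theta>) = space (M w)"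
    by (rule sets_eq_imp_space_eq) (use models_sets assms in auto)
  have qr: "\<forall>x\<in>space (M w). Q w t x \<in> {1..R w t}" using quant_range assms by blast
  have e1: "mm w t r \<theta> = measure ?D {r}" for r
  proof -
    have "Q w t -` {r} \<inter> space (P w \<theta>) = {y \<in> space (P w \<theta>). Q w t y = r}" by blast
    then show ?thesis unfolding mm_def by (simp only: measure_distr[OF Qm] sets_count_space UNIV_I Pow_UNIV)
  qed
  have "(\<Sum>r\<in>{1..R w t}. mm w t r \<theta>) = (\<Sum>r\<in>{1..R w t}. measure ?D {r})"
    by (simp only: e1)
  also have "\<dots> = measure ?D {1..R w t}"
    by (rule measure_eq_sum_singleton[symmetric]) (simp_all add: D.emeasure_finite)
  also have "\<dots> = measure (P w \<theta>) (Q w t -` {1..R w t} \<inter> space (P w \<theta>))"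
    by (rule measure_distr[OF Qm]) simp
  also have "Q w t -` {1..R w t} \<inter> space (P w \<theta>) = space (P w \<theta>)"
    using qr sp by auto
  also have "measure (P w \<theta>) (space (P w \<theta>)) = 1" by (rule prob_space)
  finally show ?thesis .
qed

lemma factor:
  assumes "\<theta> \<in> \<Theta>" "j < N" "s \<in> out_set R gw gt L j"
  shows "qprob P Q gw gt L j s \<theta> = (\<Prod>l<L j. mm (gw j l) (gt j l) (s l) \<theta>)"
proof -
  let ?I = "{..<L j}"
  define M' where "M' = (\<lambda>l. if l \<in> ?I then P (gw j l) \<theta> else count_space {})"
  have prob: "l \<in> ?I \<Longrightarrow> prob_space (P (gw j l) \<theta>)" for l using models_prob grp assms by auto
  interpret product_sigma_finite M'
    unfolding product_sigma_finite_def M'_def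
    using prob by (auto intro: prob_space_imp_sigma_finite sigma_finite_measure_count_space_finite)
  have PM: "sensor_law P gw L j \<theta> = PiM ?I M'"
    unfolding sensor_law_def M'_def by (rule PiM_cong) auto
  have sin: "s \<in> PiE ?I (\<lambda>l. {1..R (gw j l) (gt j l)})" using assms(3) by (simp add: out_set_def)
  have seteq: "{x \<in> space (sensor_law P gw L j \<theta>). superquantizer Q gw gt L j x = s}
      = PiE ?I (\<lambda>l. {y \<in> space (M' l). Q (gw j l) (gt j l) y = s l})"
  proof -
    have "superquantizer Q gw gt L j x = s \<longleftrightarrow> (\<forall>l\<in>?I. Q (gw j l) (gt j l) (x l) = s l)" for x
      using sin unfolding superquantizer_def by (auto simp: fun_eq_iff PiE_iff extensional_def restrict_def)
    then show ?thesis unfolding PM space_PiM by (auto simp: PiE_iff extensional_def)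
  qed
  have sets': "l \<in> ?I \<Longrightarrow> {y \<in> space (M' l). Q (gw j l) (gt j l) y = s l} \<in> sets (M' l)" for l
    using msets grp assms by (simp add: M'_def)
  have "qprob P Q gw gt L j s \<theta> = measure (PiM ?I M') (PiE ?I (\<lambda>l. {y \<in> space (M' l). Q (gw j l) (gt j l) y = s l}))"
    unfolding qprob_def seteq by (simp add: PM)
  also have "\<dots> = enn2real (\<Prod>l\<in>?I. emeasure (M' l) {y \<in> space (M' l). Q (gw j l) (gt j l) y = s l})"
    unfolding measure_def by (subst emeasure_PiM) (auto simp: sets')
  also have "\<dots> = enn2real (\<Prod>l\<in>?I. ennreal (mm (gw j l) (gt j l) (s l) \<theta>))"
    by (intro arg_cong[where f=enn2real] prod.cong refl)
       (simp add: M'_def mm_def finite_measure.emeasure_eq_measure[OF prob_space.axioms(1)[OF prob]])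
  also have "\<dots> = (\<Prod>l<L j. mm (gw j l) (gt j l) (s l) \<theta>)"
  proof -
    have nn: "0 \<le> (\<Prod>l\<in>?I. mm (gw j l) (gt j l) (s l) \<theta>)"
      by (intro prod_nonneg) (simp add: mm_def)
    have "(\<Prod>l\<in>?I. ennreal (mm (gw j l) (gt j l) (s l) \<theta>)) = ennreal (\<Prod>l\<in>?I. mm (gw j l) (gt j l) (s l) \<theta>)"
      by (rule prod_ennreal) (simp add: mm_def)
    then show ?thesis by (simp only: enn2real_ennreal[OF nn])
  qed
  finally show ?thesis .
qed


definition j0 :: "nat \<Rightarrow> nat \<Rightarrow> nat" where
  "j0 w t = (SOME j. j < N \<and> (\<exists>l<L j. gw j l = w \<and> gt j l = t))"
definition l0 :: "nat \<Rightarrow> nat \<Rightarrow> nat" where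
  "l0 w t = (SOME l. l < L (j0 w t) \<and> gw (j0 w t) l = w \<and> gt (j0 w t) l = t)"

lemma wit:
  assumes "w < W" "t < T w"
  shows "j0 w t < N \<and> l0 w t < L (j0 w t) \<and> gw (j0 w t) (l0 w t) = w \<and> gt (j0 w t) (l0 w t) = t"
proof -
  have "\<exists>j. j < N \<and> (\<exists>l<L j. gw j l = w \<and> gt j l = t)" using subgrp_nonempty assms by auto
  then have 1: "j0 w t < N \<and> (\<exists>l<L (j0 w t). gw (j0 w t) l = w \<and> gt (j0 w t) l = t)"
    unfolding j0_def by (rule someI_ex)
  then have "\<exists>l. l < L (j0 w t) \<and> gw (j0 w t) l = w \<and> gt (j0 w t) l = t" by auto
  then have "l0 w t < L (j0 w t) \<and> gw (j0 w t) (l0 w t) = w \<and> gt (j0 w t) (l0 w t) = t"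
    unfolding l0_def by (rule someI_ex)
  with 1 show ?thesis by auto
qed

definition pq :: "nat \<Rightarrow> nat \<Rightarrow> nat \<Rightarrow> real^'d \<Rightarrow> real" where
  "pq w t r \<theta> = (\<Sum>s\<in>{s\<in>out_set R gw gt L (j0 w t). s (l0 w t) = r}. qprob P Q gw gt L (j0 w t) s \<theta>)"

lemma pq_eq:
  assumes "\<theta> \<in> \<Theta>" "w < W" "t < T w" "r \<in> {1..R w t}"
  shows "pq w t r \<theta> = mm w t r \<theta>"
proof -
  define j where "j = j0 w t"
  define l where "l = l0 w t"
  have jl: "j < N" "l < L j" "gw j l = w" "gt j l = t" using wit[OF assms(2,3)] by (auto simp: j_def l_def)
  have os: "out_set R gw gt L j = PiE {..<L j} (\<lambda>l'. {1..R (gw j l') (gt j l')})"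
    by (simp add: out_set_def)
  have "pq w t r \<theta> = (\<Sum>s\<in>{s\<in>out_set R gw gt L j. s l = r}. \<Prod>l'<L j. mm (gw j l') (gt j l') (s l') \<theta>)"
    unfolding pq_def j_def[symmetric] l_def[symmetric]
    by (intro sum.cong refl factor[OF assms(1) jl(1)]) simp
  also have "\<dots> = mm (gw j l) (gt j l) r \<theta> * (\<Prod>l'\<in>{..<L j}-{l}. \<Sum>a\<in>{1..R (gw j l') (gt j l')}. mm (gw j l') (gt j l') a \<theta>)"
    unfolding os by (rule sum_slice_PiE) (use jl assms(4) in auto)
  also have "(\<Prod>l'\<in>{..<L j}-{l}. \<Sum>a\<in>{1..R (gw j l') (gt j l')}. mm (gw j l') (gt j l') a \<theta>) = 1"
  proof (rule prod.neutral, rule ballI)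
    fix l' assume "l' \<in> {..<L j}-{l}"
    then have "gw j l' < W" "gt j l' < T (gw j l')" using grp jl(1) by auto
    then show "(\<Sum>a\<in>{1..R (gw j l') (gt j l')}. mm (gw j l') (gt j l') a \<theta>) = 1"
      by (rule sum1[OF assms(1)])
  qed
  finally show ?thesis using jl by simp
qed

lemma mm_cont:
  assumes "\<forall>j<N. \<forall>s\<in>out_set R gw gt L j. continuous_on \<Theta> (qprob P Q gw gt L j s)"
    "w < W" "t < T w" "r \<in> {1..R w t}"
  shows "continuous_on \<Theta> (mm w t r)"
proof -
  have "continuous_on \<Theta> (pq w t r)"
    unfolding pq_def using assms(1) wit[OF assms(2,3)]
    by (intro continuous_on_sum) auto
  moreover have "continuous_on \<Theta> (pq w t r) = continuous_on \<Theta> (mm w t r)"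
    by (rule continuous_on_cong) (use pq_eq assms in auto)
  ultimately show ?thesis by simp
qed


definition mmk :: "nat \<times> nat \<times> nat \<Rightarrow> real^'d \<Rightarrow> real" where
  "mmk k = mm (fst k) (fst (snd k)) (snd (snd k))"

lemma top_eq:
  assumes "\<theta> \<in> \<Theta>" "\<theta>' \<in> \<Theta>" "w < W" "t < T w" "1 \<le> R w t"
    and lo: "\<And>r. r \<in> {1..<R w t} \<Longrightarrow> mm w t r \<theta> = mm w t r \<theta>'"
  shows "mm w t (R w t) \<theta> = mm w t (R w t) \<theta>'"
proof -
  have ins: "{1..R w t} = insert (R w t) {1..<R w t}" using assms(5) by auto
  have "mm w t (R w t) \<theta> + (\<Sum>r\<in>{1..<R w t}. mm w t r \<theta>) = 1"
    using sum1[OF assms(1,3,4)] unfolding ins by simp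
  moreover have "mm w t (R w t) \<theta>' + (\<Sum>r\<in>{1..<R w t}. mm w t r \<theta>') = 1"
    using sum1[OF assms(2,3,4)] unfolding ins by simp
  moreover have "(\<Sum>r\<in>{1..<R w t}. mm w t r \<theta>) = (\<Sum>r\<in>{1..<R w t}. mm w t r \<theta>')"
    by (rule sum.cong) (simp_all add: lo)
  ultimately show ?thesis by linarith
qed

lemma equiv_from_mm:
  assumes "\<theta> \<in> \<Theta>" "\<theta>' \<in> \<Theta>"
    and eq: "\<And>w t r. w < W \<Longrightarrow> t < T w \<Longrightarrow> r \<in> {1..<R w t} \<Longrightarrow> mm w t r \<theta> = mm w t r \<theta>'"
  shows "obs_equiv N (out_set R gw gt L) (qprob P Q gw gt L) \<theta> \<theta>'"
proof -
  have all: "mm w t r \<theta> = mm w t r \<theta>'" if "w < W" "t < T w" "r \<in> {1..R w t}" for w t r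
  proof (cases "r < R w t")
    case True then show ?thesis using eq that by auto
  next
    case False
    then have "r = R w t" using that by auto
    then show ?thesis using top_eq[OF assms(1,2) that(1,2)] eq that by auto
  qed
  have q: "qprob P Q gw gt L j s \<theta> = qprob P Q gw gt L j s \<theta>'"
    if "j < N" "s \<in> out_set R gw gt L j" for j s
  proof -
    have "(\<Prod>l<L j. mm (gw j l) (gt j l) (s l) \<theta>) = (\<Prod>l<L j. mm (gw j l) (gt j l) (s l) \<theta>')"
    proof (rule prod.cong[OF refl])
      fix l assume "l \<in> {..<L j}"
      moreover have "s l \<in> {1..R (gw j l) (gt j l)}" using that(2) \<open>l \<in> {..<L j}\<close>
        by (auto simp: out_set_def PiE_iff)
      ultimately show "mm (gw j l) (gt j l) (s l) \<theta> = mm (gw j l) (gt j l) (s l) \<theta>'"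
        using all grp that(1) by auto
    qed
    then show ?thesis using factor[OF assms(1) that] factor[OF assms(2) that] by simp
  qed
  show ?thesis unfolding obs_equiv_def
  proof
    fix u assume u: "u \<in> PiE {..<N} (out_set R gw gt L)"
    show "(\<Prod>j<N. qprob P Q gw gt L j (u j) \<theta>) = (\<Prod>j<N. qprob P Q gw gt L j (u j) \<theta>')"
      by (rule prod.cong[OF refl]) (use u q in \<open>auto simp: PiE_iff\<close>)
  qed
qed

lemma cardK: "card (Sigma {..<W} (\<lambda>w. Sigma {..<T w} (\<lambda>t. {1..<R w t}))) = lambda_ISM W T R"
  unfolding lambda_ISM_def by (simp add: card_SigmaI)

lemma part2:
  assumes cont: "\<forall>j<N. \<forall>s\<in>out_set R gw gt L j. continuous_on \<Theta> (qprob P Q gw gt L j s)"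
    and dim: "CARD('d) > lambda_ISM W T R"
    and U: "open U" "U \<noteq> {}" "U \<subseteq> \<Theta>"
  shows "infinite {\<theta>\<in>U. \<not> identifiable_point N (out_set R gw gt L) (qprob P Q gw gt L) \<Theta> \<theta>}"
proof
  define F where "F = {\<theta>\<in>U. \<not> identifiable_point N (out_set R gw gt L) (qprob P Q gw gt L) \<Theta> \<theta>}"
  assume finF: "finite {\<theta>\<in>U. \<not> identifiable_point N (out_set R gw gt L) (qprob P Q gw gt L) \<Theta> \<theta>}"
  then have finF: "finite F" unfolding F_def .
  define K where "K = Sigma {..<W} (\<lambda>w. Sigma {..<T w} (\<lambda>t. {1..<R w t}))"
  have finK: "finite K" unfolding K_def by auto
  have cK: "card K < CARD('d)" using cardK dim unfolding K_def by simp
  obtain \<iota> :: "nat \<times> nat \<times> nat \<Rightarrow> 'd" where inj: "inj_on \<iota> K"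
    using card_le_inj[OF finK, of "UNIV::'d set"] cK by auto
  define e where "e k = (axis (\<iota> k) (1::real) :: real^'d)" for k
  define \<psi> where "\<psi> \<theta> = (\<Sum>k\<in>K. mmk k \<theta> *\<^sub>R e k)" for \<theta>
  have comp: "\<psi> \<theta> $ \<iota> k = mmk k \<theta>" if "k \<in> K" for \<theta> k
  proof -
    have "\<psi> \<theta> $ \<iota> k = (\<Sum>k'\<in>K. mmk k' \<theta> * (if \<iota> k = \<iota> k' then 1 else 0))"
      by (simp add: \<psi>_def e_def sum_component axis_def)
    also have "\<dots> = (\<Sum>k'\<in>K. if k' = k then mmk k \<theta> else 0)"
      by (rule sum.cong[OF refl]) (use inj that in \<open>auto simp: inj_on_def\<close>)
    also have "\<dots> = mmk k \<theta>" using finK that by simp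
    finally show ?thesis .
  qed
  have eqv: "obs_equiv N (out_set R gw gt L) (qprob P Q gw gt L) a b"
    if "a \<in> \<Theta>" "b \<in> \<Theta>" "\<psi> a = \<psi> b" for a b
  proof (rule equiv_from_mm[OF that(1,2)])
    fix w t r assume "w < W" "t < T w" "r \<in> {1..<R w t}"
    then have "(w, t, r) \<in> K" unfolding K_def by auto
    then show "mm w t r a = mm w t r b" using comp[of "(w,t,r)"] that(3) by (metis fst_conv snd_conv mmk_def)
  qed
  have contpsi: "continuous_on \<Theta> \<psi>"
    unfolding \<psi>_def
  proof (intro continuous_on_sum continuous_on_scaleR continuous_on_const)
    fix k assume "k \<in> K"
    then obtain w t r where k: "k = (w,t,r)" "w < W" "t < T w" "r \<in> {1..R w t}" unfolding K_def by auto
    show "continuous_on \<Theta> (mmk k)" unfolding mmk_def k(1) using mm_cont[OF cont k(2-4)] by simp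
  qed
  have inspan: "\<psi> \<theta> \<in> span (e ` K)" for \<theta>
    unfolding \<psi>_def by (intro span_sum span_scale span_base) auto
  have dimE: "dim (e ` K) \<le> card K"
    using dim_le_card[of "e ` K" "e ` K"] card_image_le[OF finK, of e] finK by (simp add: span_base subsetI)
  define U' where "U' = U - F"
  have oU': "open U'" unfolding U'_def using U(1) finF by (simp add: open_Diff finite_imp_closed)
  have neU': "U' \<noteq> {}"
  proof
    assume "U' = {}"
    then have "U \<subseteq> F" unfolding U'_def by auto
    then have fU: "finite U" using finF finite_subset by blast
    obtain x where "x \<in> U" using U(2) by auto
    then have "x islimpt U" using interior_limit_point[of x U] interior_open[OF U(1)] by simp
    then show False using islimpt_finite[OF fU] by simp
  qed
  then obtain x where "x \<in> U'" by auto
  then obtain \<epsilon> where \<epsilon>: "\<epsilon> > 0" "ball x \<epsilon> \<subseteq> U'" using oU' open_contains_ball by blast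
  have bT: "ball x \<epsilon> \<subseteq> \<Theta>" using \<epsilon>(2) U(3) unfolding U'_def by auto
  have injb: "inj_on \<psi> (ball x \<epsilon>)"
  proof (rule inj_onI, rule ccontr)
    fix a b assume ab: "a \<in> ball x \<epsilon>" "b \<in> ball x \<epsilon>" "\<psi> a = \<psi> b" "a \<noteq> b"
    have "a \<in> \<Theta>" "b \<in> \<Theta>" using ab bT by auto
    then have "obs_equiv N (out_set R gw gt L) (qprob P Q gw gt L) a b" using eqv ab(3) by blast
    then have "\<not> identifiable_point N (out_set R gw gt L) (qprob P Q gw gt L) \<Theta> a"
      unfolding identifiable_point_def using \<open>b \<in> \<Theta>\<close> ab(4) by auto
    moreover have "a \<in> U" "a \<notin> F" using ab(1) \<epsilon>(2) unfolding U'_def by auto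
    ultimately show False unfolding F_def by auto
  qed
  have "aff_dim (ball x \<epsilon>) \<le> aff_dim (span (e ` K))"
  proof (rule invariance_of_dimension_convex_domain)
    show "convex (ball x \<epsilon>)" by simp
    show "continuous_on (ball x \<epsilon>) \<psi>" using continuous_on_subset[OF contpsi bT] .
    show "\<psi> \<in> ball x \<epsilon> \<rightarrow> affine hull span (e ` K)"
    proof -
      have eqa: "affine hull span (e ` K) = span (e ` K)"
        by (rule affine_hull_eq[THEN iffD2]) (rule subspace_imp_affine, rule subspace_span)
      show ?thesis unfolding eqa using inspan by blast
    qed
    show "inj_on \<psi> (ball x \<epsilon>)" by (rule injb)
  qed
  moreover have "aff_dim (ball x \<epsilon>) = int CARD('d)" using \<epsilon>(1) by (simp add: aff_dim_open)
  moreover have "aff_dim (span (e ` K)) = int (dim (e ` K))" by (simp add: aff_dim_subspace)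
  ultimately show False using dimE cK by linarith
qed


lemma part1:
  assumes diff: "\<forall>j<N. \<forall>s\<in>out_set R gw gt L j. twice_differentiable_on (qprob P Q gw gt L j s) \<Theta>"
    and dim: "CARD('d) > lambda_ISM W T R"
    and th: "\<theta> \<in> interior \<Theta>"
  shows "det (fisher_info N (out_set R gw gt L) (qprob P Q gw gt L) \<theta>) = 0"
proof -
  obtain e where e: "e > 0" "ball \<theta> e \<subseteq> \<Theta>" using th mem_interior by blast
  have thT: "\<theta> \<in> \<Theta>" using e by auto
  define q where "q = qprob P Q gw gt L"
  define Dq where "Dq j s = frechet_derivative (q j s) (at \<theta>)" for j s
  have dq: "(q j s has_derivative Dq j s) (at \<theta>)" if js: "j < N" "s \<in> out_set R gw gt L j" for j s
  proof -
    obtain g where "\<forall>x\<in>\<Theta>. (q j s has_derivative (\<lambda>h. g x \<bullet> h)) (at x within \<Theta>)"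
      using diff js unfolding twice_differentiable_on_def q_def by blast
    then have "(q j s has_derivative (\<lambda>h. g \<theta> \<bullet> h)) (at \<theta> within \<Theta>)" using thT by blast
    then have h: "(q j s has_derivative (\<lambda>h. g \<theta> \<bullet> h)) (at \<theta>)" using at_within_interior[OF th] by simp
    then have "(\<lambda>h. g \<theta> \<bullet> h) = Dq j s" unfolding Dq_def by (rule frechet_derivative_at)
    then show ?thesis using h by simp
  qed
  define Dp where "Dp w t r = (\<lambda>h. \<Sum>s\<in>{s\<in>out_set R gw gt L (j0 w t). s (l0 w t) = r}. Dq (j0 w t) s h)" for w t r
  have dp: "(mm w t r has_derivative Dp w t r) (at \<theta>)" if "w < W" "t < T w" "r \<in> {1..R w t}" for w t r
  proof -
    have "(pq w t r has_derivative Dp w t r) (at \<theta>)"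
      unfolding pq_def Dp_def q_def[symmetric]
      by (intro has_derivative_sum dq) (use wit[OF that(1,2)] in auto)
    then show ?thesis
      by (rule has_derivative_transform_within_open[of _ _ _ _ "ball \<theta> e"])
         (use e pq_eq that in auto)
  qed
  define K where "K = Sigma {..<W} (\<lambda>w. Sigma {..<T w} (\<lambda>t. {1..<R w t}))"
  have finK: "finite K" unfolding K_def by auto
  have cK: "card K < CARD('d)" using cardK dim unfolding K_def by simp
  define gp where "gp k = (\<chi> i. Dp (fst k) (fst (snd k)) (snd (snd k)) (axis i 1))" for k
  have "dim (gp ` K) \<le> card (gp ` K)"
    by (rule dim_le_card) (auto intro: span_base simp: finK)
  also have "\<dots> \<le> card K" using finK by (rule card_image_le)
  finally have dlt: "dim (gp ` K) < DIM(real^'d)" using cK by simp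
  obtain z :: "real^'d" where z: "z \<noteq> 0" "\<And>y. y \<in> span (gp ` K) \<Longrightarrow> orthogonal z y"
    by (rule orthogonal_to_subspace_exists[OF dlt]) blast
  have dpK: "Dp w t r z = 0" if "w < W" "t < T w" "r \<in> {1..<R w t}" for w t r
  proof -
    have "(w,t,r) \<in> K" using that unfolding K_def by auto
    then have "orthogonal z (gp (w,t,r))" by (intro z(2) span_base imageI)
    moreover have r1: "r \<in> {1..R w t}" using that by auto
    have "Dp w t r z = gp (w,t,r) \<bullet> z"
      unfolding gp_def fst_conv snd_conv by (rule lin_inner[OF has_derivative_linear[OF dp[OF that(1,2) r1]]])
    ultimately show ?thesis by (simp add: orthogonal_def inner_commute)
  qed
  have dpAll: "Dp w t r z = 0" if "w < W" "t < T w" "r \<in> {1..R w t}" for w t r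
  proof (cases "r < R w t")
    case True then show ?thesis using dpK that by auto
  next
    case False
    then have rR: "r = R w t" using that by auto
    have ins: "{1..R w t} = insert (R w t) {1..<R w t}" using that by auto
    have hs: "((\<lambda>x. \<Sum>r\<in>{1..R w t}. mm w t r x) has_derivative (\<lambda>h. \<Sum>r\<in>{1..R w t}. Dp w t r h)) (at \<theta>)"
      by (intro has_derivative_sum dp) (use that in auto)
    have "((\<lambda>x. 1::real) has_derivative (\<lambda>h. \<Sum>r\<in>{1..R w t}. Dp w t r h)) (at \<theta>)"
      by (rule has_derivative_transform_within_open[OF hs, of "ball \<theta> e"])
         (use e sum1 that in auto)
    moreover have "((\<lambda>x. 1::real) has_derivative (\<lambda>h. 0)) (at \<theta>)" by simp
    ultimately have "(\<lambda>h. \<Sum>r\<in>{1..R w t}. Dp w t r h) = (\<lambda>h. 0)" by (rule has_derivative_unique)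
    then have "(\<Sum>r\<in>{1..R w t}. Dp w t r z) = 0" by metis
    then have "Dp w t (R w t) z + (\<Sum>r\<in>{1..<R w t}. Dp w t r z) = 0" unfolding ins by simp
    moreover have "(\<Sum>r\<in>{1..<R w t}. Dp w t r z) = 0"
      by (rule sum.neutral) (use dpK that in auto)
    ultimately show ?thesis using rR by simp
  qed
  have dqz: "Dq j s z = 0" if "j < N" "s \<in> out_set R gw gt L j" for j s
  proof -
    have sl: "l < L j \<Longrightarrow> gw j l < W \<and> gt j l < T (gw j l) \<and> s l \<in> {1..R (gw j l) (gt j l)}" for l
      using grp that by (auto simp: out_set_def PiE_iff)
    define D' where "D' = (\<lambda>h. \<Sum>l\<in>{..<L j}. Dp (gw j l) (gt j l) (s l) h *
        (\<Prod>l'\<in>{..<L j} - {l}. mm (gw j l') (gt j l') (s l') \<theta>))"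
    have hp: "((\<lambda>x. \<Prod>l\<in>{..<L j}. mm (gw j l) (gt j l) (s l) x) has_derivative D') (at \<theta>)"
      unfolding D'_def by (intro has_derivative_prod dp) (use sl in auto)
    have "(q j s has_derivative D') (at \<theta>)"
      by (rule has_derivative_transform_within_open[OF hp, of "ball \<theta> e"])
         (use e factor that in \<open>auto simp: q_def\<close>)
    then have "D' = Dq j s" using dq[OF that] by (rule has_derivative_unique)
    moreover have "D' z = 0" unfolding D'_def
      by (rule sum.neutral) (use dpAll sl in auto)
    ultimately show ?thesis by simp
  qed
  have gz: "grad (q j s) \<theta> \<bullet> z = 0" if "j < N" "s \<in> out_set R gw gt L j" for j s
  proof -
    have "grad (q j s) \<theta> \<bullet> z = Dq j s z"
      unfolding grad_def Dq_def[symmetric]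
      by (rule lin_inner[OF has_derivative_linear[OF dq[OF that]], symmetric])
    then show ?thesis using dqz[OF that] by simp
  qed
  have Jz: "fisher_info N (out_set R gw gt L) q \<theta> *v z = 0"
    unfolding fisher_info_def sum_mv
    by (intro sum.neutral ballI) (simp add: sum_mv rank1_mv gz)
  show ?thesis
  proof (rule ccontr)
    assume "det (fisher_info N (out_set R gw gt L) (qprob P Q gw gt L) \<theta>) \<noteq> 0"
    then have "invertible (fisher_info N (out_set R gw gt L) q \<theta>)"
      unfolding q_def by (simp add: invertible_det_nz)
    then have "\<exists>B. B ** fisher_info N (out_set R gw gt L) q \<theta> = mat 1"
      unfolding invertible_def by blast
    then have "z = 0" using Jz matrix_left_invertible_ker by blast
    then show False using z(1) by simp
  qed
qed

end

theorem theorem5: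
  fixes N W :: nat
    and L :: "nat \<Rightarrow> nat"
    and T :: "nat \<Rightarrow> nat"
    and gw gt :: "nat \<Rightarrow> nat \<Rightarrow> nat"
    and R :: "nat \<Rightarrow> nat \<Rightarrow> nat"
    and M :: "nat \<Rightarrow> 'x measure"
    and P :: "nat \<Rightarrow> real^'d \<Rightarrow> 'x measure"
    and Q :: "nat \<Rightarrow> nat \<Rightarrow> 'x \<Rightarrow> nat"
    and \<Theta> :: "(real^'d) set"
  assumes W_lt: "W < (\<Sum>j<N. L j)"
    and T_pos: "\<forall>w<W. 0 < T w"
    and grp: "\<forall>j<N. \<forall>l<L j. gw j l < W \<and> gt j l < T (gw j l)"
    and subgrp_nonempty: "\<forall>w<W. \<forall>t<T w. \<exists>j<N. \<exists>l<L j. gw j l = w \<and> gt j l = t"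
    and models_prob: "\<forall>w<W. \<forall>\<theta>\<in>\<Theta>. prob_space (P w \<theta>)"
    and models_sets: "\<forall>w<W. \<forall>\<theta>. sets (P w \<theta>) = sets (M w)"
    and quant_meas: "\<forall>w<W. \<forall>t<T w. Q w t \<in> measurable (M w) (count_space UNIV)"
    and quant_range: "\<forall>w<W. \<forall>t<T w. \<forall>x\<in>space (M w). Q w t x \<in> {1..R w t}"
    and int_ne: "interior \<Theta> \<noteq> {}"
    and dim: "CARD('d) > lambda_ISM W T R"
  shows
    "((\<forall>j<N. \<forall>s\<in>out_set R gw gt L j.
          twice_differentiable_on (qprob P Q gw gt L j s) \<Theta>)
      \<longrightarrow> (\<forall>\<theta>\<in>interior \<Theta>.
             det (fisher_info N (out_set R gw gt L) (qprob P Q gw gt L) \<theta>) = 0))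
   \<and> ((\<forall>j<N. \<forall>s\<in>out_set R gw gt L j. continuous_on \<Theta> (qprob P Q gw gt L j s))
      \<longrightarrow> (\<not> identifiable_set N (out_set R gw gt L) (qprob P Q gw gt L) \<Theta>
           \<and> (\<forall>U. open U \<and> U \<noteq> {} \<and> U \<subseteq> \<Theta> \<longrightarrow>
                 infinite {\<theta>\<in>U. \<not> identifiable_point N (out_set R gw gt L)
                                      (qprob P Q gw gt L) \<Theta> \<theta>})))"
proof -
  interpret qsys N W L T gw gt R M P Q \<Theta>
    using grp subgrp_nonempty models_prob models_sets quant_meas quant_range
    by (unfold_locales) auto
  have A: "(\<forall>j<N. \<forall>s\<in>out_set R gw gt L j.
          twice_differentiable_on (qprob P Q gw gt L j s) \<Theta>)
      \<longrightarrow> (\<forall>\<theta>\<in>interior \<Theta>.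
             det (fisher_info N (out_set R gw gt L) (qprob P Q gw gt L) \<theta>) = 0)"
    using part1 dim by blast
  have B: "(\<forall>j<N. \<forall>s\<in>out_set R gw gt L j. continuous_on \<Theta> (qprob P Q gw gt L j s))
      \<longrightarrow> (\<not> identifiable_set N (out_set R gw gt L) (qprob P Q gw gt L) \<Theta>
           \<and> (\<forall>U. open U \<and> U \<noteq> {} \<and> U \<subseteq> \<Theta> \<longrightarrow>
                 infinite {\<theta>\<in>U. \<not> identifiable_point N (out_set R gw gt L)
                                      (qprob P Q gw gt L) \<Theta> \<theta>}))"
  proof (intro impI conjI allI)
    assume cont: "\<forall>j<N. \<forall>s\<in>out_set R gw gt L j. continuous_on \<Theta> (qprob P Q gw gt L j s)"
    show inf: "infinite {\<theta>\<in>U. \<not> identifiable_point N (out_set R gw gt L) (qprob P Q gw gt L) \<Theta> \<theta>}"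
      if "open U \<and> U \<noteq> {} \<and> U \<subseteq> \<Theta>" for U
      using part2[OF cont dim] that by blast
    have "infinite {\<theta>\<in>interior \<Theta>. \<not> identifiable_point N (out_set R gw gt L) (qprob P Q gw gt L) \<Theta> \<theta>}"
      using part2[OF cont dim, of "interior \<Theta>"] int_ne interior_subset by blast
    then obtain \<theta> where "\<theta> \<in> interior \<Theta>" "\<not> identifiable_point N (out_set R gw gt L) (qprob P Q gw gt L) \<Theta> \<theta>"
      using not_finite_existsD by blast
    then show "\<not> identifiable_set N (out_set R gw gt L) (qprob P Q gw gt L) \<Theta>"
      unfolding identifiable_set_def using interior_subset by blast
  qed
  show ?thesis using A B by blast
qed

end
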